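(* Let $A$ be a C*-algebra and $D$ a modular maximal right ideal of $A$. Regard $A$ as a right Hilbert $A$-module with $\langle a,b\rangle=a^*b$ and $D\subseteq A$ as a Hilbert $A$-submodule. Then every bounded $A$-linear map $r:D^{\perp\perp}\to A$ which vanishes on $D$ is the zero map, where $D^{\perp\perp}$ is the biorthogonal complement of $D$ in $A$.
   Context: A right ideal $D$ of $A$ is modular if there exists $u\in A$ with $a-ua\in D$ for all $a\in A$; it is maximal if it is a proper right ideal not contained in any larger proper right ideal. For $S\subseteq A$, $S^\perp=\{b\in A: s^*b=0\ \forall s\in S\}$ and $S^{\perp\perp}=(S^\perp)^\perp$. *)

theory Defs
  imports "HOL-Analysis.Analysis"
begin

text \<open>A (not necessarily unital) C*-algebra, on a real Banach algebra type 'a, with an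
  explicit complex scalar multiplication sc (compatible with the real one) and an
  involution st.\<close>

locale cstar_algebra =
  fixes sc :: "complex \<Rightarrow> 'a::{banach, real_normed_algebra} \<Rightarrow> 'a"
    and st :: "'a \<Rightarrow> 'a"
  assumes sc_of_real: "\<And>r x. sc (complex_of_real r) x = r *\<^sub>R x"
    and sc_add_right: "\<And>c x y. sc c (x + y) = sc c x + sc c y"
    and sc_add_left: "\<And>c d x. sc (c + d) x = sc c x + sc d x"
    and sc_mult: "\<And>c d x. sc (c * d) x = sc c (sc d x)"
    and sc_one: "\<And>x. sc 1 x = x"
    and sc_norm: "\<And>c x. norm (sc c x) = cmod c * norm x"
    and sc_mult_left: "\<And>c x y. sc c (x * y) = sc c x * y"
    and sc_mult_right: "\<And>c x y. sc c (x * y) = x * sc c y"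
    and st_st: "\<And>x. st (st x) = x"
    and st_add: "\<And>x y. st (x + y) = st x + st y"
    and st_sc: "\<And>c x. st (sc c x) = sc (cnj c) (st x)"
    and st_mult: "\<And>x y. st (x * y) = st y * st x"
    and cstar_id: "\<And>x. norm (st x * x) = (norm x)\<^sup>2"

definition right_ideal :: "(complex \<Rightarrow> 'a \<Rightarrow> 'a) \<Rightarrow> ('a::{banach, real_normed_algebra}) set \<Rightarrow> bool" where
  "right_ideal sc D \<longleftrightarrow> 0 \<in> D \<and> (\<forall>x\<in>D. \<forall>y\<in>D. x + y \<in> D) \<and> (\<forall>c. \<forall>x\<in>D. sc c x \<in> D)
     \<and> (\<forall>x\<in>D. \<forall>a. x * a \<in> D)"

definition modular_right_ideal :: "(complex \<Rightarrow> 'a \<Rightarrow> 'a) \<Rightarrow> ('a::{banach, real_normed_algebra}) set \<Rightarrow> bool" where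
  "modular_right_ideal sc D \<longleftrightarrow> right_ideal sc D \<and> (\<exists>u. \<forall>a. a - u * a \<in> D)"

definition maximal_right_ideal :: "(complex \<Rightarrow> 'a \<Rightarrow> 'a) \<Rightarrow> ('a::{banach, real_normed_algebra}) set \<Rightarrow> bool" where
  "maximal_right_ideal sc D \<longleftrightarrow> right_ideal sc D \<and> D \<noteq> UNIV \<and>
     (\<forall>E. right_ideal sc E \<and> E \<noteq> UNIV \<and> D \<subseteq> E \<longrightarrow> E = D)"

text \<open>Orthogonal complement in the Hilbert module A_A with inner product a* b.\<close>
definition orth :: "('a \<Rightarrow> 'a) \<Rightarrow> ('a::{banach, real_normed_algebra}) set \<Rightarrow> 'a set" where
  "orth st S = {b. \<forall>s\<in>S. st s * b = 0}"

definition bounded_module_map ::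
  "(complex \<Rightarrow> 'a \<Rightarrow> 'a) \<Rightarrow> ('a::{banach, real_normed_algebra}) set \<Rightarrow> ('a \<Rightarrow> 'a) \<Rightarrow> bool" where
  "bounded_module_map sc M r \<longleftrightarrow>
     (\<forall>x\<in>M. \<forall>y\<in>M. r (x + y) = r x + r y) \<and>
     (\<forall>c. \<forall>x\<in>M. r (sc c x) = sc c (r x)) \<and>
     (\<forall>x\<in>M. \<forall>a. r (x * a) = r x * a) \<and>
     (\<exists>K. \<forall>x\<in>M. norm (r x) \<le> K * norm x)"

end

theory Submission
  imports Defs
begin

theorem theorem5p1:
  fixes sc :: "complex \<Rightarrow> 'a::{banach, real_normed_algebra} \<Rightarrow> 'a"
    and st :: "'a \<Rightarrow> 'a"
    and D :: "'a set"
    and r :: "'a \<Rightarrow> 'a"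
  assumes "cstar_algebra sc st"
    and "modular_right_ideal sc D"
    and "maximal_right_ideal sc D"
    and "bounded_module_map sc (orth st (orth st D)) r"
    and "\<forall>x\<in>D. r x = 0"
  shows "\<forall>x\<in>orth st (orth st D). r x = 0"
proof -
  interpret C: cstar_algebra sc st by fact
  have st0: "st 0 = 0"
    using C.st_add[of 0 0] by simp
  have sc0: "sc c 0 = 0" for c
    using C.sc_norm[of c 0] by simp
  have rD: "right_ideal sc D" using assms(3) unfolding maximal_right_ideal_def by blast
  have orth_ri: "right_ideal sc (orth st S)" for S
    unfolding right_ideal_def orth_def
    by (auto simp: distrib_left C.sc_mult_right[symmetric] sc0 mult.assoc[symmetric])
  have sub: "D \<subseteq> orth st (orth st D)"
  proof
    fix d assume d: "d \<in> D"
    show "d \<in> orth st (orth st D)"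
      unfolding orth_def
    proof (intro CollectI ballI)
      fix b assume "b \<in> {b. \<forall>s\<in>D. st s * b = 0}"
      then have "st d * b = 0" using d by blast
      then have "st (st d * b) = 0" using st0 by simp
      then show "st b * d = 0" by (simp add: C.st_mult C.st_st)
    qed
  qed
  show ?thesis
  proof (cases "orth st (orth st D) = UNIV")
    case False
    then have "orth st (orth st D) = D"
      using assms(3) orth_ri sub unfolding maximal_right_ideal_def by blast
    then show ?thesis using assms(5) by simp
  next
    case True
    obtain u where u: "\<And>a. a - u * a \<in> D"
      using assms(2) unfolding modular_right_ideal_def by blast
    have lin: "\<And>x y. r (x + y) = r x + r y" and ml: "\<And>x a. r (x * a) = r x * a"
      using assms(4) True unfolding bounded_module_map_def by auto
    have ra: "r a = r u * a" for a
    proof -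
      have "r a = r (u * a + (a - u * a))" by simp
      also have "\<dots> = r (u * a) + r (a - u * a)" by (rule lin)
      also have "\<dots> = r u * a" using ml[of u a] u[of a] assms(5) by simp
      finally show ?thesis .
    qed
    have Dp0: "b = 0" if b: "b \<in> orth st D" for b
    proof -
      have "b \<in> orth st (orth st D)" using True by simp
      then have "st b * b = 0" using b unfolding orth_def by blast
      then have "norm b ^ 2 = 0" using C.cstar_id[of b] by simp
      then show ?thesis by simp
    qed
    have "st (r u) \<in> orth st D"
      unfolding orth_def
    proof (intro CollectI ballI)
      fix d assume "d \<in> D"
      then have "r u * d = 0" using ra assms(5) by metis
      then have "st (r u * d) = 0" using st0 by simp
      then show "st d * st (r u) = 0" by (simp add: C.st_mult)
    qed
    then have "st (r u) = 0" using Dp0 by blast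
    then have "r u = 0" using C.st_st[of "r u"] st0 by simp
    then show ?thesis using ra by (metis mult_zero_left)
  qed
qed

end
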